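(* Let $G$ be a supergraceful graph with $p$ nodes and $q$ edges having a total labeling $\varphi$ with $1 \in N(\varphi)$. Then for each integer $t \ge 0$ there exists a supergraceful graph with $p+t$ nodes and $q+t$ edges.
   Context: Graphs are finite, simple. For a labeling $\varphi: V(G) \to \mathbb{Z}_{>0}$ let $N(\varphi) = \{\varphi(x) : x \in V(G)\}$ and $E(\varphi) = \{|\varphi(x)-\varphi(y)| : xy \in E(G)\}$. A total labeling of a graph with $p$ nodes and $q$ edges is a map $\varphi$ such that the $p$ node labels and the $q$ edge labels are pairwise distinct and $N(\varphi) \cup E(\varphi) = \{1,\dots,p+q\}$; a graph is supergraceful if it admits a total labeling. *)

theory Defs
  imports Main
begin

definition simple_graph :: "'a set \<Rightarrow> 'a set set \<Rightarrow> bool" where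
  "simple_graph V E \<longleftrightarrow> finite V \<and>
     (\<forall>e\<in>E. \<exists>x y. x \<in> V \<and> y \<in> V \<and> x \<noteq> y \<and> e = {x, y})"

definition node_labels :: "'a set \<Rightarrow> ('a \<Rightarrow> int) \<Rightarrow> int set" where
  "node_labels V \<phi> = \<phi> ` V"

definition edge_labels :: "'a set set \<Rightarrow> ('a \<Rightarrow> int) \<Rightarrow> int set" where
  "edge_labels E \<phi> = {\<bar>\<phi> x - \<phi> y\<bar> | x y. {x, y} \<in> E}"

text \<open>Positivity of labels follows from the last condition.\<close>
definition total_labeling :: "'a set \<Rightarrow> 'a set set \<Rightarrow> ('a \<Rightarrow> int) \<Rightarrow> bool" where
  "total_labeling V E \<phi> \<longleftrightarrow>
     (\<forall>x\<in>V. \<phi> x > 0) \<and>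
     inj_on \<phi> V \<and>
     card (edge_labels E \<phi>) = card E \<and>
     node_labels V \<phi> \<inter> edge_labels E \<phi> = {} \<and>
     node_labels V \<phi> \<union> edge_labels E \<phi> = {1 .. int (card V + card E)}"

definition supergraceful :: "'a set \<Rightarrow> 'a set set \<Rightarrow> bool" where
  "supergraceful V E \<longleftrightarrow> simple_graph V E \<and> (\<exists>\<phi>. total_labeling V E \<phi>)"

end

theory Submission
  imports Defs
begin

lemma sg_Pow: assumes "simple_graph V E" shows "E \<subseteq> Pow V"
proof
  fix e assume "e \<in> E"
  then obtain x y where "x \<in> V" "y \<in> V" "e = {x,y}" using assms unfolding simple_graph_def by blast
  thus "e \<in> Pow V" by simp
qed

lemma sg_finE: assumes "simple_graph V E" shows "finite E" "finite V"
proof -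
  have "E \<subseteq> Pow V" using sg_Pow[OF assms] .
  thus "finite E" using assms unfolding simple_graph_def by (meson finite_Pow_iff finite_subset)
  show "finite V" using assms unfolding simple_graph_def by blast
qed

lemma step_nat:
  fixes V :: "nat set" and E :: "nat set set"
  assumes sg: "simple_graph V E" and tl: "total_labeling V E int" and one: "1 \<in> V"
  shows "simple_graph (insert (card V + card E + 2) V) (insert {1, card V + card E + 2} E)
    \<and> total_labeling (insert (card V + card E + 2) V) (insert {1, card V + card E + 2} E) int
    \<and> 1 \<in> insert (card V + card E + 2) V
    \<and> card (insert (card V + card E + 2) V) = card V + 1
    \<and> card (insert {1, card V + card E + 2} E) = card E + 1"
proof -
  define n where "n = card V + card E"
  have fE: "finite E" and fV: "finite V" using sg_finE[OF sg] by auto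
  have un: "int ` V \<union> edge_labels E int = {1 .. int n}"
    using tl unfolding total_labeling_def node_labels_def n_def by auto
  have dj: "int ` V \<inter> edge_labels E int = {}"
    using tl unfolding total_labeling_def node_labels_def by auto
  have ce: "card (edge_labels E int) = card E" using tl unfolding total_labeling_def by auto
  have nV: "n + 2 \<notin> V"
  proof
    assume "n + 2 \<in> V" then have "int (n+2) \<in> {1..int n}" using un by blast
    thus False by simp
  qed
  have nE: "{1, n+2} \<notin> E"
  proof
    assume "{1, n+2} \<in> E"
    then obtain x y where "x \<in> V" "y \<in> V" "{1, n+2} = {x,y}" using sg unfolding simple_graph_def by blast
    then have "n + 2 \<in> V" by (metis doubleton_eq_iff)
    with nV show False by simp
  qed
  have el: "edge_labels (insert {1, n+2} E) int = insert (int n + 1) (edge_labels E int)"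
  proof -
    have a: "{x, y} = {1, n+2} \<Longrightarrow> \<bar>int x - int y\<bar> = int n + 1" for x y :: nat
      by (auto simp: doubleton_eq_iff)
    show ?thesis unfolding edge_labels_def
    proof (rule set_eqI, rule iffI)
      fix z assume "z \<in> {\<bar>int x - int y\<bar> |x y. {x, y} \<in> insert {1, n + 2} E}"
      then obtain x y where "z = \<bar>int x - int y\<bar>" "{x,y} \<in> insert {1, n + 2} E" by blast
      thus "z \<in> insert (int n + 1) {\<bar>int x - int y\<bar> |x y. {x, y} \<in> E}" using a by auto
    next
      fix z assume "z \<in> insert (int n + 1) {\<bar>int x - int y\<bar> |x y. {x, y} \<in> E}"
      then show "z \<in> {\<bar>int x - int y\<bar> |x y. {x, y} \<in> insert {1, n + 2} E}"
      proof
        assume "z = int n + 1"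
        then have "z = \<bar>int (n+2) - int 1\<bar> \<and> {n+2, 1} \<in> insert {1, n + 2} E" by (auto simp: insert_commute)
        thus ?thesis by blast
      qed blast
    qed
  qed
  have sub: "x \<in> {1..int n}" if "x \<in> edge_labels E int \<or> x \<in> int ` V" for x
    using un that by blast
  have n1: "int n + 1 \<notin> edge_labels E int" using sub[of "int n + 1"] by auto
  have n1': "int n + 1 \<notin> int ` V" using sub[of "int n + 1"] by auto
  have n2: "int n + 2 \<notin> edge_labels E int" using sub[of "int n + 2"] by auto
  have cV: "card (insert (n+2) V) = card V + 1" using fV nV by simp
  have cE: "card (insert {1, n+2} E) = card E + 1" using fE nE by simp
  have sg': "simple_graph (insert (n+2) V) (insert {1, n+2} E)"
    unfolding simple_graph_def
  proof (intro conjI ballI)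
    show "finite (insert (n + 2) V)" using fV by simp
    fix e assume "e \<in> insert {1, n + 2} E"
    then show "\<exists>x y. x \<in> insert (n + 2) V \<and> y \<in> insert (n + 2) V \<and> x \<noteq> y \<and> e = {x, y}"
    proof
      assume "e = {1, n+2}" then show ?thesis using one by (intro exI[of _ 1] exI[of _ "n+2"]) simp
    next
      assume "e \<in> E"
      then obtain x y where "x \<in> V" "y \<in> V" "x \<noteq> y" "e = {x, y}"
        using sg unfolding simple_graph_def by blast
      then show ?thesis by blast
    qed
  qed
  have fEL: "finite (edge_labels E int)" using un by (metis finite_Un finite_atLeastAtMost_int)
  have tl': "total_labeling (insert (n+2) V) (insert {1, n+2} E) int"
    unfolding total_labeling_def node_labels_def el
  proof (intro conjI)
    show "\<forall>x\<in>insert (n + 2) V. 0 < int x"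
    proof
      fix x assume "x \<in> insert (n + 2) V"
      then show "0 < int x"
      proof
        assume "x \<in> V" then show ?thesis using sub[of "int x"] by auto
      qed simp
    qed
    show "inj_on int (insert (n + 2) V)" by (simp add: inj_on_def)
    show "card (insert (int n + 1) (edge_labels E int)) = card (insert {1, n + 2} E)"
      using cE ce n1 fEL by simp
    show "int ` insert (n + 2) V \<inter> insert (int n + 1) (edge_labels E int) = {}"
      using dj n1' n2 by (auto simp: add.commute)
    show "int ` insert (n + 2) V \<union> insert (int n + 1) (edge_labels E int) =
      {1..int (card (insert (n + 2) V) + card (insert {1, n + 2} E))}"
    proof -
      have "int (card V + 1 + (card E + 1)) = int n + 2" by (simp add: n_def)
      then show ?thesis unfolding cV cE using un by auto
    qed
  qed
  have o': "1 \<in> insert (n+2) V" using one by simp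
  show ?thesis using sg' tl' cV cE o' unfolding n_def by blast
qed

lemma iter_nat:
  fixes V :: "nat set" and E :: "nat set set"
  assumes "simple_graph V E" "total_labeling V E int" "1 \<in> V"
  shows "\<exists>(V' :: nat set) (E' :: nat set set). simple_graph V' E' \<and> total_labeling V' E' int
     \<and> 1 \<in> V' \<and> card V' = card V + t \<and> card E' = card E + t"
proof (induction t)
  case 0 show ?case using assms by (intro exI[of _ V] exI[of _ E]) simp
next
  case (Suc t)
  then obtain V' E' where h: "simple_graph V' E'" "total_labeling V' E' int" "1 \<in> V'"
    "card V' = card V + t" "card E' = card E + t" by blast
  note s = step_nat[OF h(1-3)]
  define V2 where "V2 = insert (card V' + card E' + 2) V'"
  define E2 where "E2 = insert {1, card V' + card E' + 2} E'"
  have s2: "simple_graph V2 E2" "total_labeling V2 E2 int" "1 \<in> V2" "card V2 = card V' + 1"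
    "card E2 = card E' + 1" using s unfolding V2_def E2_def by blast+
  have "card V2 = card V + Suc t" "card E2 = card E + Suc t" using s2(4,5) h(4,5) by linarith+
  then show ?case using s2(1-3) by blast
qed

theorem theorem8p5:
  fixes V :: "'a set" and E :: "'a set set" and \<phi> :: "'a \<Rightarrow> int" and t :: nat
  assumes "simple_graph V E"
    and "total_labeling V E \<phi>"
    and "1 \<in> node_labels V \<phi>"
  shows "\<exists>(V' :: nat set) (E' :: nat set set).
           supergraceful V' E' \<and> card V' = card V + t \<and> card E' = card E + t"
proof -
  define f where "f = (\<lambda>x. nat (\<phi> x))"
  have pos: "\<And>x. x \<in> V \<Longrightarrow> \<phi> x > 0" using assms(2) unfolding total_labeling_def by auto
  have fi: "\<And>x. x \<in> V \<Longrightarrow> int (f x) = \<phi> x" using pos unfolding f_def by (simp add: less_imp_le)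
  have injp: "inj_on \<phi> V" using assms(2) unfolding total_labeling_def by auto
  have injf: "inj_on f V" using injp fi unfolding inj_on_def by metis
  have EV: "E \<subseteq> Pow V" using sg_Pow[OF assms(1)] .
  define V0 where "V0 = f ` V"
  define E0 where "E0 = (\<lambda>e. f ` e) ` E"
  have cV0: "card V0 = card V" unfolding V0_def using card_image[OF injf] .
  have injI: "inj_on (\<lambda>e. f ` e) E"
    using inj_on_image_Pow[OF injf] EV by (meson inj_on_subset)
  have cE0: "card E0 = card E" unfolding E0_def using card_image[OF injI] .
  have sg0: "simple_graph V0 E0"
    unfolding simple_graph_def
  proof (intro conjI ballI)
    show "finite V0" using assms(1) unfolding simple_graph_def V0_def by simp
    fix e0 assume "e0 \<in> E0"
    then obtain e where e: "e \<in> E" "e0 = f ` e" unfolding E0_def by blast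
    then obtain x y where xy: "x \<in> V" "y \<in> V" "x \<noteq> y" "e = {x,y}"
      using assms(1) unfolding simple_graph_def by blast
    have "f x \<noteq> f y" using injf xy unfolding inj_on_def by blast
    moreover have "e0 = {f x, f y}" using e xy by simp
    moreover have "f x \<in> V0" "f y \<in> V0" using xy unfolding V0_def by auto
    ultimately show "\<exists>a b. a \<in> V0 \<and> b \<in> V0 \<and> a \<noteq> b \<and> e0 = {a, b}" by blast
  qed
  have nl: "int ` V0 = \<phi> ` V" unfolding V0_def image_image using fi by (intro image_cong) auto
  have el: "edge_labels E0 int = edge_labels E \<phi>"
  proof (rule set_eqI, rule iffI)
    fix z assume "z \<in> edge_labels E0 int"
    then obtain a b where z: "z = \<bar>int a - int b\<bar>" "{a,b} \<in> E0" unfolding edge_labels_def by blast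
    then obtain e where e: "e \<in> E" "{a,b} = f ` e" unfolding E0_def by blast
    then obtain x y where xy: "x \<in> V" "y \<in> V" "e = {x,y}" using assms(1) unfolding simple_graph_def by blast
    then have "{a,b} = {f x, f y}" using e by simp
    then have "z = \<bar>int (f x) - int (f y)\<bar>" using z by (auto simp: doubleton_eq_iff abs_minus_commute)
    then have "z = \<bar>\<phi> x - \<phi> y\<bar>" using fi xy by simp
    thus "z \<in> edge_labels E \<phi>" unfolding edge_labels_def using e xy by blast
  next
    fix z assume "z \<in> edge_labels E \<phi>"
    then obtain x y where z: "z = \<bar>\<phi> x - \<phi> y\<bar>" "{x,y} \<in> E" unfolding edge_labels_def by blast
    then have xy: "x \<in> V" "y \<in> V" using EV by auto
    have "f ` {x, y} \<in> E0" unfolding E0_def using z(2) by (rule imageI)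
    then have "{f x, f y} \<in> E0" by simp
    moreover have "z = \<bar>int (f x) - int (f y)\<bar>" using z fi xy by simp
    ultimately show "z \<in> edge_labels E0 int" unfolding edge_labels_def by blast
  qed
  have tl0: "total_labeling V0 E0 int"
  proof -
    have p0: "\<forall>x\<in>V0. 0 < int x"
    proof
      fix x assume "x \<in> V0"
      then have "int x \<in> \<phi> ` V" using nl by blast
      then obtain y where "y \<in> V" "int x = \<phi> y" by blast
      then show "0 < int x" using pos by metis
    qed
    have i0: "inj_on int V0" by (simp add: inj_on_def)
    show ?thesis
      using assms(2) p0 i0 unfolding total_labeling_def node_labels_def el nl cV0 cE0 by simp
  qed
  have one0: "1 \<in> V0"
  proof -
    obtain x where x: "x \<in> V" "\<phi> x = 1" using assms(3) unfolding node_labels_def by auto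
    then have "f x = 1" unfolding f_def by simp
    thus ?thesis using x unfolding V0_def by force
  qed
  obtain V' E' where h: "simple_graph V' E'" "total_labeling V' E' int"
     "card V' = card V0 + t" "card E' = card E0 + t"
    using iter_nat[OF sg0 tl0 one0, of t] by blast
  have "supergraceful V' E'" unfolding supergraceful_def using h(1,2) by blast
  moreover have "card V' = card V + t" "card E' = card E + t" using h(3,4) cV0 cE0 by simp_all
  ultimately show ?thesis by blast
qed

end
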